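(* Let $H$ be the adjacency matrix or the Laplacian matrix of an undirected weighted connected graph on vertices $1,\dots,n$ (so $H$ is real symmetric), and suppose perfect state transfer from vertex $1$ to vertex $2$ occurs at time $t_0$, i.e. $|\langle 1|e^{it_0H}|2\rangle|=1$. Let $H_0$ be a small nonzero real symmetric $n\times n$ perturbation matrix and set $\hat H=t_0H+H_0$. Then \[ \|e^{i(t_0H+H_0)}-e^{it_0H}\|\ \le\ \|H_0\|\,e^{\|H_0\|}, \] and consequently \[ 1-|\langle 1|e^{i(t_0H+H_0)}|2\rangle|^2\ \le\ 2\|H_0\|e^{\|H_0\|}-\|H_0\|^2e^{2\|H_0\|}\ \le\ 2\|H_0\|+\|H_0\|^2-\|H_0\|^3 . \]
   Context: $\|\cdot\|$ denotes the operator (spectral) norm. For a weighted graph with edge weights $w(j,k)$, the adjacency matrix $A$ has $(j,k)$ entry $w(j,k)$ if $j,k$ are adjacent and $0$ otherwise; the Laplacian is $L=R-A$ with $R$ the diagonal matrix of row sums of $A$. $\langle 1|M|2\rangle$ denotes the $(1,2)$ entry of a matrix $M$. *)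

theory Defs
  imports "HOL-Analysis.Analysis"
begin

fun mpow :: "complex^'n^'n \<Rightarrow> nat \<Rightarrow> complex^'n^'n" where
  "mpow A 0 = mat 1"
| "mpow A (Suc k) = A ** mpow A k"

definition mexp :: "complex^'n^'n \<Rightarrow> complex^'n^'n" where
  "mexp A = (\<Sum>k. (1 / fact k) *\<^sub>R mpow A k)"

definition opnorm :: "complex^'n^'n \<Rightarrow> real" where
  "opnorm A = onorm (\<lambda>x. A *v x)"

definition cmat :: "real^'n^'n \<Rightarrow> complex^'n^'n" where
  "cmat M = (\<chi> j k. complex_of_real (M $ j $ k))"

definition imat :: "real^'n^'n \<Rightarrow> complex^'n^'n" where
  "imat M = (\<chi> j k. \<i> * complex_of_real (M $ j $ k))"

definition weighted_connected_graph :: "('n \<Rightarrow> 'n \<Rightarrow> bool) \<Rightarrow> ('n \<Rightarrow> 'n \<Rightarrow> real) \<Rightarrow> bool" where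
  "weighted_connected_graph E w \<longleftrightarrow>
     (\<forall>j k. E j k \<longrightarrow> E k j) \<and> (\<forall>j. \<not> E j j) \<and>
     (\<forall>j k. w j k = w k j) \<and> (\<forall>j k. E j k \<longrightarrow> w j k > 0) \<and>
     (\<forall>j k. E\<^sup>*\<^sup>* j k)"

definition adj_matrix :: "('n::finite \<Rightarrow> 'n \<Rightarrow> bool) \<Rightarrow> ('n \<Rightarrow> 'n \<Rightarrow> real) \<Rightarrow> real^'n^'n" where
  "adj_matrix E w = (\<chi> j k. if E j k then w j k else 0)"

definition laplacian_matrix :: "('n::finite \<Rightarrow> 'n \<Rightarrow> bool) \<Rightarrow> ('n \<Rightarrow> 'n \<Rightarrow> real) \<Rightarrow> real^'n^'n" where
  "laplacian_matrix E w =
     (\<chi> j k. (if j = k then (\<Sum>l\<in>UNIV. adj_matrix E w $ j $ l) else 0) - adj_matrix E w $ j $ k)"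

end

theory Submission
  imports Defs
begin


typedef (overloaded) 'n endo = "UNIV :: ((complex^('n::finite)) \<Rightarrow>\<^sub>L (complex^'n)) set"
  morphisms rep_endo Abs_endo by auto

setup_lifting type_definition_endo

instantiation endo :: (finite) real_normed_algebra_1
begin
lift_definition norm_endo :: "'a endo \<Rightarrow> real" is norm .
lift_definition minus_endo :: "'a endo \<Rightarrow> 'a endo \<Rightarrow> 'a endo" is "(-)" .
lift_definition plus_endo :: "'a endo \<Rightarrow> 'a endo \<Rightarrow> 'a endo" is "(+)" .
lift_definition uminus_endo :: "'a endo \<Rightarrow> 'a endo" is "uminus" .
lift_definition zero_endo :: "'a endo" is "0" .
lift_definition scaleR_endo :: "real \<Rightarrow> 'a endo \<Rightarrow> 'a endo" is "scaleR" .
lift_definition times_endo :: "'a endo \<Rightarrow> 'a endo \<Rightarrow> 'a endo" is "(o\<^sub>L)" .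
lift_definition one_endo :: "'a endo" is "id_blinfun" .
definition dist_endo :: "'a endo \<Rightarrow> 'a endo \<Rightarrow> real"
  where "dist_endo a b = norm (a - b)"
definition uniformity_endo :: "('a endo \<times> 'a endo) filter" where
  "uniformity_endo = (INF e\<in>{0 <..}. principal {(x, y). dist x y < e})"
definition open_endo :: "'a endo set \<Rightarrow> bool"
  where "open_endo S = (\<forall>x\<in>S. \<forall>\<^sub>F (x', y) in uniformity. x' = x \<longrightarrow> y \<in> S)"
definition sgn_endo :: "'a endo \<Rightarrow> 'a endo"
  where "sgn_endo x = scaleR (inverse (norm x)) x"

instance
proof
  show "dist x y = norm (x - y)" for x y :: "'a endo" by (simp add: dist_endo_def)
  show "sgn x = inverse (norm x) *\<^sub>R x" for x :: "'a endo" by (simp add: sgn_endo_def)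
  show "(uniformity :: ('a endo \<times> 'a endo) filter) = (INF e\<in>{0 <..}. principal {(x, y). dist x y < e})"
    by (simp add: uniformity_endo_def)
  show "open U = (\<forall>x\<in>U. \<forall>\<^sub>F (x', y) in uniformity. x' = x \<longrightarrow> y \<in> U)" for U :: "'a endo set"
    by (simp add: open_endo_def)
  show "a + b + c = a + (b + c)" for a b c :: "'a endo" by transfer (simp add: add.assoc)
  show "a + b = b + a" for a b :: "'a endo" by transfer (simp add: add.commute)
  show "0 + a = a" for a :: "'a endo" by transfer simp
  show "- a + a = 0" for a :: "'a endo" by transfer simp
  show "a - b = a + - b" for a b :: "'a endo" by transfer simp
  show "r *\<^sub>R (a + b) = r *\<^sub>R a + r *\<^sub>R b" for r and a b :: "'a endo" by transfer (simp add: scaleR_right_distrib)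
  show "(r + s) *\<^sub>R a = r *\<^sub>R a + s *\<^sub>R a" for r s and a :: "'a endo" by transfer (simp add: scaleR_left_distrib)
  show "r *\<^sub>R s *\<^sub>R a = (r * s) *\<^sub>R a" for r s and a :: "'a endo" by transfer simp
  show "1 *\<^sub>R a = a" for a :: "'a endo" by transfer simp
  show "(norm x = 0) = (x = 0)" for x :: "'a endo" by transfer simp
  show "norm (x + y) \<le> norm x + norm y" for x y :: "'a endo" by transfer (rule norm_triangle_ineq)
  show "norm (r *\<^sub>R x) = \<bar>r\<bar> * norm x" for r and x :: "'a endo" by transfer simp
  show "a * b * c = a * (b * c)" for a b c :: "'a endo" by transfer (rule blinfun_eqI, simp)
  show "(a + b) * c = a * c + b * c" for a b c :: "'a endo"
    by transfer (rule blinfun_eqI, simp add: blinfun.bilinear_simps)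
  show "a * (b + c) = a * b + a * c" for a b c :: "'a endo"
    by transfer (rule blinfun_eqI, simp add: blinfun.bilinear_simps)
  show "r *\<^sub>R a * b = r *\<^sub>R (a * b)" for r and a b :: "'a endo"
    by transfer (rule blinfun_eqI, simp add: blinfun.bilinear_simps)
  show "a * r *\<^sub>R b = r *\<^sub>R (a * b)" for r and a b :: "'a endo"
    by transfer (rule blinfun_eqI, simp add: blinfun.bilinear_simps)
  show "1 * a = a" for a :: "'a endo" by transfer (rule blinfun_eqI, simp)
  show "a * 1 = a" for a :: "'a endo" by transfer (rule blinfun_eqI, simp)
  show "(0::'a endo) \<noteq> 1"
  proof transfer
    have "norm (id_blinfun :: (complex^'a) \<Rightarrow>\<^sub>L (complex^'a)) = 1" by simp
    then show "(0 :: (complex^'a) \<Rightarrow>\<^sub>L (complex^'a)) \<noteq> id_blinfun" by (metis norm_zero zero_neq_one)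
  qed
  show "norm (x * y) \<le> norm x * norm y" for x y :: "'a endo"
    by transfer (rule norm_blinfun_compose)
  show "norm (1::'a endo) = 1" by transfer simp
qed
end

lemma norm_rep_endo: "norm (rep_endo x) = norm x" by transfer simp
lemma rep_endo_diff: "rep_endo (x - y) = rep_endo x - rep_endo y" by transfer simp

instance endo :: (finite) banach
proof
  fix X :: "nat \<Rightarrow> 'a endo"
  assume "Cauchy X"
  then have "Cauchy (\<lambda>n. rep_endo (X n))"
    unfolding Cauchy_def dist_norm by (simp add: rep_endo_diff[symmetric] norm_rep_endo)
  then obtain L where "(\<lambda>n. rep_endo (X n)) \<longlonglongrightarrow> L" using convergent_eq_Cauchy convergent_def by blast
  then have "X \<longlonglongrightarrow> Abs_endo L"
    unfolding lim_sequentially dist_norm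
    by (metis rep_endo_diff norm_rep_endo Abs_endo_inverse UNIV_I)
  then show "convergent X" unfolding convergent_def by blast
qed



lemma norm_vec_le_sum: "norm (x::'a::real_normed_vector^'n) \<le> (\<Sum>i\<in>UNIV. norm (x$i))"
  unfolding norm_vec_def by (rule L2_set_le_sum) simp

lemma mv_bounded_linear: "bounded_linear (\<lambda>x::complex^'n. X *v x)"
proof -
  have "linear (\<lambda>x::complex^'n. X *v x)"
  proof (rule linearI)
    show "X *v (a + b) = X *v a + X *v b" for a b by (rule matrix_vector_right_distrib)
    show "X *v (r *\<^sub>R b) = r *\<^sub>R (X *v b)" for r and b :: "complex^'n"
      by (simp add: vec_eq_iff matrix_vector_mult_def scaleR_sum_right)
  qed
  then show ?thesis by (simp add: linear_conv_bounded_linear)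
qed

definition Em :: "complex^'n^'n \<Rightarrow> 'n::finite endo" where
  "Em X = Abs_endo (Blinfun (\<lambda>x. X *v x))"

lemma app_Em: "blinfun_apply (rep_endo (Em X)) y = X *v y"
  unfolding Em_def by (simp add: Abs_endo_inverse bounded_linear_Blinfun_apply mv_bounded_linear)

lemma endo_eqI: "(\<And>y. blinfun_apply (rep_endo a) y = blinfun_apply (rep_endo b) y) \<Longrightarrow> a = b"
  by (metis blinfun_eqI rep_endo_inject)

lemma Em_mult: "Em (X ** Y) = Em X * Em Y"
  by (rule endo_eqI) (simp add: times_endo.rep_eq app_Em matrix_vector_mul_assoc)
lemma Em_add: "Em (X + Y) = Em X + Em Y"
  by (rule endo_eqI) (simp add: plus_endo.rep_eq app_Em matrix_vector_mult_add_rdistrib blinfun.add_left)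
lemma Em_diff: "Em (X - Y) = Em X - Em Y"
  by (rule endo_eqI) (simp add: minus_endo.rep_eq app_Em matrix_vector_mult_diff_rdistrib blinfun.diff_left)
lemma Em_scaleR: "Em (r *\<^sub>R X) = r *\<^sub>R Em X"
  by (rule endo_eqI) (simp add: scaleR_endo.rep_eq app_Em blinfun.scaleR_left vec_eq_iff matrix_vector_mult_def scaleR_sum_right)
lemma Em_one: "Em (mat 1) = 1"
  by (rule endo_eqI) (simp add: one_endo.rep_eq app_Em)
lemma norm_Em: "norm (Em X) = opnorm X"
  by (simp add: norm_endo.rep_eq norm_blinfun.rep_eq opnorm_def Em_def Abs_endo_inverse
      bounded_linear_Blinfun_apply mv_bounded_linear)

lemma Em_pow: "Em X ^ n = Em (mpow X n)"
  by (induction n) (simp_all add: Em_one Em_mult)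

lemma Em_bl: "bounded_linear (Em :: complex^'n^'n \<Rightarrow> 'n::finite endo)"
proof -
  have "linear (Em :: complex^'n^'n \<Rightarrow> 'n endo)"
    by (rule linearI) (simp_all add: Em_add Em_scaleR)
  then show ?thesis by (simp add: linear_conv_bounded_linear)
qed

definition Gm :: "'n::finite endo \<Rightarrow> complex^'n^'n" where
  "Gm F = (\<chi> i j. blinfun_apply (rep_endo F) (axis j 1) $ i)"

lemma Gm_Em: "Gm (Em X) = X"
  by (simp add: Gm_def app_Em vec_eq_iff matrix_vector_mult_def axis_def if_distrib if_distribR cong: if_cong)

lemma Gm_bl: "bounded_linear (Gm :: 'n::finite endo \<Rightarrow> complex^'n^'n)"
proof (rule bounded_linear_intro)
  show "Gm (x + y) = Gm x + Gm y" for x y :: "'n endo"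
    by (simp add: Gm_def vec_eq_iff plus_endo.rep_eq blinfun.add_left)
  show "Gm (r *\<^sub>R x) = r *\<^sub>R Gm x" for r and x :: "'n endo"
    by (simp add: Gm_def vec_eq_iff scaleR_endo.rep_eq blinfun.scaleR_left)
  show "norm (Gm x) \<le> norm x * (\<Sum>i\<in>(UNIV::'n set). \<Sum>j\<in>(UNIV::'n set). norm (axis j (1::complex)))"
    for x :: "'n endo"
  proof -
    have "norm (Gm x) \<le> (\<Sum>i\<in>UNIV. norm (Gm x $ i))" by (rule norm_vec_le_sum)
    also have "\<dots> \<le> (\<Sum>i\<in>UNIV. \<Sum>j\<in>UNIV. norm (Gm x $ i $ j))"
      by (rule sum_mono) (rule norm_vec_le_sum)
    also have "\<dots> \<le> (\<Sum>i\<in>(UNIV::'n set). \<Sum>j\<in>(UNIV::'n set). norm x * norm (axis j (1::complex)))"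
    proof (intro sum_mono)
      fix i j :: 'n
      have "norm (Gm x $ i $ j) = norm (blinfun_apply (rep_endo x) (axis j 1) $ i)"
        by (simp add: Gm_def)
      also have "\<dots> \<le> norm (blinfun_apply (rep_endo x) (axis j 1))" by (rule Finite_Cartesian_Product.norm_nth_le)
      also have "\<dots> \<le> norm (rep_endo x) * norm (axis j (1::complex))" by (rule norm_blinfun)
      finally show "norm (Gm x $ i $ j) \<le> norm x * norm (axis j (1::complex))"
        by (simp add: norm_rep_endo)
    qed
    finally show ?thesis by (simp add: sum_distrib_left mult_ac)
  qed
qed

lemma Em_mexp: "Em (mexp X) = exp (Em X)"
proof -
  let ?f = "\<lambda>k. (1 / fact k) *\<^sub>R mpow X k"
  have eq: "Em (?f k) = Em X ^ k /\<^sub>R fact k" for k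
    by (simp add: Em_scaleR Em_pow inverse_eq_divide)
  have s1: "summable (\<lambda>k. Em X ^ k /\<^sub>R fact k)" by (rule summable_exp_generic)
  then have "summable (\<lambda>k. Em (?f k))" by (simp add: eq)
  then have "summable (\<lambda>k. Gm (Em (?f k)))" by (rule bounded_linear.summable[OF Gm_bl])
  then have s2: "summable ?f" by (simp add: Gm_Em)
  have "Em (mexp X) = (\<Sum>k. Em (?f k))"
    unfolding mexp_def by (rule bounded_linear.suminf[OF Em_bl s2])
  also have "\<dots> = exp (Em X)" by (simp add: eq exp_def)
  finally show ?thesis .
qed



lemma rep_endo_bl: "bounded_linear (rep_endo :: 'n::finite endo \<Rightarrow> _)"
  by (rule bounded_linear_intro[where K=1])
     (simp_all add: plus_endo.rep_eq scaleR_endo.rep_eq norm_rep_endo)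

lemma app_bl: "bounded_linear (\<lambda>F::'n::finite endo. blinfun_apply (rep_endo F) x)"
  by (rule bounded_linear_compose[OF blinfun.bounded_linear_left rep_endo_bl])

definition skew :: "'n::finite endo \<Rightarrow> bool" where
  "skew A \<longleftrightarrow> (\<forall>y. inner y (blinfun_apply (rep_endo A) y) = 0)"

lemma skew_scaleR: "skew A \<Longrightarrow> skew (r *\<^sub>R A)"
  by (simp add: skew_def scaleR_endo.rep_eq blinfun.scaleR_left)

lemma skew_uminus: "skew A \<Longrightarrow> skew (- A)"
  by (simp add: skew_def uminus_endo.rep_eq blinfun.minus_left)

lemma skew_exp_norm:
  fixes A :: "'n::finite endo"
  assumes sk: "skew A"
  shows "norm (exp A) \<le> 1"
proof -
  have "norm (blinfun_apply (rep_endo (exp A)) x) \<le> 1 * norm x" for x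
  proof -
    define v where "v = (\<lambda>t. blinfun_apply (rep_endo (exp (t *\<^sub>R A))) x)"
    define h where "h t = inner (v t) (v t)" for t
    have dv: "(v has_derivative (\<lambda>s. s *\<^sub>R blinfun_apply (rep_endo A) (v t))) (at t)" for t
    proof -
      have "((\<lambda>t. exp (t *\<^sub>R A)) has_derivative (\<lambda>s. s *\<^sub>R (A * exp (t *\<^sub>R A)))) (at t)"
        using exp_scaleR_has_vector_derivative_left[of A t] by (simp add: has_vector_derivative_def)
      from bounded_linear.has_derivative[OF app_bl[of x] this]
      show ?thesis
        by (simp add: v_def times_endo.rep_eq scaleR_endo.rep_eq blinfun.scaleR_left)
    qed
    have dh: "DERIV h t :> 0" for t
    proof -
      have "(h has_derivative (\<lambda>s. inner (v t) (s *\<^sub>R blinfun_apply (rep_endo A) (v t))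
              + inner (s *\<^sub>R blinfun_apply (rep_endo A) (v t)) (v t))) (at t)"
        unfolding h_def by (rule has_derivative_inner[OF dv dv])
      moreover have "(\<lambda>s. inner (v t) (s *\<^sub>R blinfun_apply (rep_endo A) (v t))
              + inner (s *\<^sub>R blinfun_apply (rep_endo A) (v t)) (v t)) = (\<lambda>s. 0 * s)"
        using sk by (auto simp: skew_def inner_commute)
      moreover have "(\<lambda>s::real. 0 * s) = (*) 0" by auto
      ultimately show ?thesis by (simp only: has_field_derivative_def)
    qed
    have "h 1 = h 0" using DERIV_isconst_all[of h] dh by blast
    then have "inner (v 1) (v 1) = inner x x"
      by (simp add: h_def v_def one_endo.rep_eq)
    then have "norm (v 1) = norm x" by (simp add: norm_eq_sqrt_inner)
    then show ?thesis by (simp add: v_def)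
  qed
  then have "norm (rep_endo (exp A)) \<le> 1" by (intro norm_blinfun_bound) auto
  then show ?thesis by (simp add: norm_rep_endo)
qed

lemma duhamel:
  fixes A B :: "'n::finite endo"
  assumes sA: "skew A" and sC: "skew (A + B)"
  shows "norm (exp (A + B) - exp A) \<le> norm B"
proof -
  define C where "C = A + B"
  define g where "g s = exp (s *\<^sub>R C) * exp (s *\<^sub>R (- A))" for s :: real
  have dg: "(g has_vector_derivative exp (s *\<^sub>R C) * B * exp (s *\<^sub>R (- A))) (at s within {0..1})" for s
  proof -
    have "(g has_vector_derivative (exp (s *\<^sub>R C) * ((- A) * exp (s *\<^sub>R (- A))) + (exp (s *\<^sub>R C) * C) * exp (s *\<^sub>R (- A)))) (at s within {0..1})"
      unfolding g_def
      using has_vector_derivative_mult[OF exp_scaleR_has_vector_derivative_right[of C s "{0..1}"]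
          has_vector_derivative_at_within[OF exp_scaleR_has_vector_derivative_left[of "- A" s]]] .
    moreover have "exp (s *\<^sub>R C) * ((- A) * exp (s *\<^sub>R (- A))) + (exp (s *\<^sub>R C) * C) * exp (s *\<^sub>R (- A))
        = exp (s *\<^sub>R C) * B * exp (s *\<^sub>R (- A))"
      by (simp add: C_def algebra_simps)
    ultimately show ?thesis by simp
  qed
  have bnd: "norm (exp (s *\<^sub>R C) * B * exp (s *\<^sub>R (- A))) \<le> norm B" for s
  proof -
    have e1: "norm (exp (s *\<^sub>R C)) \<le> 1" using sC by (intro skew_exp_norm skew_scaleR) (simp add: C_def)
    have e2: "norm (exp (s *\<^sub>R (- A))) \<le> 1" using sA by (intro skew_exp_norm skew_scaleR skew_uminus)
    have "norm (exp (s *\<^sub>R C) * B * exp (s *\<^sub>R (- A))) \<le> norm (exp (s *\<^sub>R C)) * norm B * norm (exp (s *\<^sub>R (- A)))"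
      by (metis norm_mult_ineq order_trans mult_right_mono norm_ge_zero)
    also have "\<dots> \<le> 1 * norm B * 1"
      by (intro mult_mono e1 e2) auto
    finally show ?thesis by simp
  qed
  have "norm (g 1 - g 0) \<le> norm B * norm (1 - (0::real))"
  proof (rule differentiable_bound[where f'="\<lambda>s h. h *\<^sub>R (exp (s *\<^sub>R C) * B * exp (s *\<^sub>R (- A)))"])
    show "convex {0..1::real}" by simp
    show "(g has_derivative (\<lambda>h. h *\<^sub>R (exp (s *\<^sub>R C) * B * exp (s *\<^sub>R (- A))))) (at s within {0..1})" for s
      using dg[of s] by (simp add: has_vector_derivative_def)
    show "onorm (\<lambda>h. h *\<^sub>R (exp (s *\<^sub>R C) * B * exp (s *\<^sub>R (- A)))) \<le> norm B" for s
      by (rule onorm_bound) (auto intro: order_trans[OF _ mult_left_mono[OF bnd]] simp: mult.commute)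
  qed auto
  then have g1: "norm (exp C * exp (- A) - 1) \<le> norm B" by (simp add: g_def)
  have inv: "exp (- A) * exp A = 1"
    by (metis exp_add_commuting exp_zero add.left_inverse minus_mult_commute)
  have "exp C - exp A = (exp C * exp (- A) - 1) * exp A"
    by (simp add: algebra_simps mult.assoc inv)
  then have "norm (exp C - exp A) \<le> norm (exp C * exp (- A) - 1) * norm (exp A)"
    by (metis norm_mult_ineq)
  also have "\<dots> \<le> norm B * 1"
    by (intro mult_mono g1 skew_exp_norm sA) auto
  finally show ?thesis by (simp add: C_def)
qed



lemma exp_bound3:
  fixes x :: real
  assumes a: "0 \<le> x" and b: "x \<le> 1"
  shows "exp x \<le> 1 + x + x\<^sup>2/2 + x^3/3"
proof -
  have sumsx: "(\<lambda>n. x^3 / 6 * (1/2) ^ n) sums (x^3/3)"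
    using sums_mult[OF geometric_sums[of "1/2::real"], of "x^3/6"] by simp
  have "(\<Sum>n. inverse(fact (n+3)) * (x ^ (n + 3))) \<le> (\<Sum>n. x^3 / 6 * (1/2) ^ n)"
  proof (intro suminf_le allI)
    show "inverse (fact (n + 3)) * x ^ (n + 3) \<le> x^3 / 6 * (1/2) ^ n" for n :: nat
    proof -
      have "(6::nat) * 2 ^ n \<le> fact (n + 3)"
      proof (induct n)
        case 0 show ?case by (simp add: fact_numeral)
      next
        case (Suc n)
        have "(6::nat) * 2 ^ Suc n = 2 * (6 * 2^n)" by simp
        also have "\<dots> \<le> 2 * fact (n+3)" using Suc by simp
        also have "\<dots> \<le> (n+4) * fact (n+3)" by (intro mult_right_mono) auto
        also have "\<dots> = fact (Suc (n + 3))" by (subst fact_Suc) (simp del: fact_Suc)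
        finally show ?case by (simp del: fact_Suc add: add.commute)
      qed
      then have "real ((6::nat) * 2 ^ n) \<le> real_of_nat (fact (n + 3))"
        by (simp only: of_nat_le_iff)
      then have "((6::real) * 2 ^ n) \<le> fact (n + 3)"
        unfolding of_nat_fact by simp
      then have "inverse (fact (n + 3)) \<le> inverse ((6::real) * 2 ^ n)"
        by (rule le_imp_inverse_le) simp
      then have "inverse (fact (n + 3)) \<le> 1/(6::real) * (1/2)^n"
        by (simp add: power_inverse [symmetric])
      then have "inverse (fact (n + 3)) * (x^n * x^3) \<le> 1/6 * (1/2)^n * (1 * x^3)"
        by (rule mult_mono) (rule mult_mono, simp_all add: power_le_one a b)
      then show ?thesis
        unfolding power_add by (simp add: ac_simps del: fact_Suc)
    qed
    show "summable (\<lambda>n. inverse (fact (n + 3)) * x ^ (n + 3))"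
      by (rule summable_exp [THEN summable_ignore_initial_segment])
    show "summable (\<lambda>n. x^3 / 6 * (1/2) ^ n)"
      by (rule sums_summable [OF sumsx])
  qed
  also have "\<dots> = x^3/3" by (rule sums_unique [THEN sym]) (rule sumsx)
  finally have t: "(\<Sum>n. inverse(fact (n+3)) * (x ^ (n + 3))) \<le> x^3/3" .
  have "exp x = (\<Sum>n<3. inverse(fact n) *\<^sub>R (x ^ n)) + (\<Sum>n. inverse(fact (n + 3)) *\<^sub>R (x ^ (n + 3)))"
    by (rule exp_first_terms)
  also have "(\<Sum>n<3. inverse(fact n) *\<^sub>R (x ^ n)) = 1 + x + x\<^sup>2/2"
  proof -
    have "(3::nat) = Suc (Suc (Suc 0))" by simp
    then have "(\<Sum>n<3. inverse(fact n) *\<^sub>R (x ^ n)) = (\<Sum>n<Suc (Suc (Suc 0)). inverse(fact n) *\<^sub>R (x ^ n))"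
      by (simp only:)
    also have "\<dots> = 1 + x + x\<^sup>2/2"
      by (simp only: sum.lessThan_Suc) (simp, simp add: power2_eq_square)
    finally show ?thesis .
  qed
  finally show ?thesis using t by simp
qed

lemma real_ineq:
  fixes x :: real
  assumes x0: "0 \<le> x" and small: "x * exp x \<le> 1"
  shows "2 * x * exp x - x\<^sup>2 * exp (2 * x) \<le> 2 * x + x\<^sup>2 - x^3"
proof -
  define y where "y = x * exp x"
  have lhs: "2 * x * exp x - x\<^sup>2 * exp (2 * x) = 2 * y - y\<^sup>2"
    by (simp add: y_def power2_eq_square exp_add[symmetric] mult_ac)
  have y1: "y \<le> 1" using small by (simp add: y_def)
  have xy: "x \<le> y" unfolding y_def using x0 by (simp add: mult_le_cancel_left1)
  show ?thesis
  proof (cases "x \<ge> 1/2")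
    case True
    have x1: "x \<le> 1" using xy y1 by simp
    have "x^3 \<le> x^2" using x0 x1 by (simp add: power3_eq_cube power2_eq_square mult_left_le)
    moreover have "2 * y - y\<^sup>2 \<le> 1" using sum_squares_ge_zero[of "1 - y" 0]
      by (simp add: power2_eq_square algebra_simps)
    ultimately show ?thesis using True lhs by linarith
  next
    case False
    define u where "u = 1 + x + x\<^sup>2/2 + x^3/3"
    define v where "v = x * u"
    have eu: "exp x \<le> u" unfolding u_def using False x0 by (intro exp_bound3) auto
    have yv: "y \<le> v" unfolding y_def v_def using eu x0 by (simp add: mult_left_mono)
    have p2: "x^2 \<le> (1/2)^2" using False x0 by (intro power_mono) auto
    have p3: "x^3 \<le> (1/2)^3" using False x0 by (intro power_mono) auto
    have p4: "x^4 \<le> (1/2)^4" using False x0 by (intro power_mono) auto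
    have vexp: "v = x + x^2 + x^3/2 + x^4/3"
      unfolding v_def u_def by algebra
    have "x^2 \<le> 1/4" "x^3 \<le> 1/8" "x^4 \<le> 1/16" using p2 p3 p4 by (simp_all add: power_divide)
    then have v1: "v \<le> 1" using vexp False by linarith
    have "0 \<le> (v - y) * (2 - v - y)" using yv v1 y1 by (intro mult_nonneg_nonneg) auto
    then have "2 * y - y\<^sup>2 \<le> 2 * v - v\<^sup>2" by (simp add: power2_eq_square algebra_simps)
    also have "2 * v - v\<^sup>2 = 2 * x + x\<^sup>2 - x^3
        - (4/3 * x^4 + 5/3 * x^5 + 11/12 * x^6 + 1/3 * x^7 + 1/9 * x^8)"
      using vexp by algebra
    also have "\<dots> \<le> 2 * x + x\<^sup>2 - x^3"
    proof -
      have "0 \<le> 4/3 * x^4 + 5/3 * x^5 + 11/12 * x^6 + 1/3 * x^7 + 1/9 * x^8"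
        using x0 by (intro add_nonneg_nonneg mult_nonneg_nonneg zero_le_power) auto
      then show ?thesis by linarith
    qed
    finally show ?thesis using lhs by simp
  qed
qed



lemma norm_axis_c: "norm (axis j (1::complex) :: complex^'n) = 1"
proof -
  have "(\<Sum>i\<in>UNIV. (norm (axis j (1::complex) $ i))\<^sup>2) = (\<Sum>i\<in>(UNIV::'n set). if i = j then 1 else 0)"
    by (rule sum.cong) (auto simp: axis_def)
  then show ?thesis by (simp add: norm_vec_def L2_set_def)
qed

lemma entry_le_opnorm: "cmod (Z $ i $ j) \<le> opnorm (Z :: complex^'n^'n)"
proof -
  have "Z $ i $ j = (Z *v axis j 1) $ i"
    by (simp add: matrix_vector_mult_def axis_def if_distrib if_distribR cong: if_cong)
  then have "cmod (Z $ i $ j) \<le> norm (Z *v axis j 1)"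
    by (simp add: Finite_Cartesian_Product.norm_nth_le)
  also have "\<dots> \<le> opnorm Z * norm (axis j (1::complex) :: complex^'n)"
    unfolding opnorm_def by (rule onorm[OF mv_bounded_linear])
  finally show ?thesis by (simp add: norm_axis_c)
qed

lemma skew_imat:
  fixes M :: "real^'n::finite^'n"
  assumes sym: "transpose M = M"
  shows "skew (Em (imat M))"
  unfolding skew_def
proof
  fix y :: "complex^'n"
  have Ms: "M $ j $ i = M $ i $ j" for i j
    using sym by (metis transpose_def vec_lambda_beta)
  define a where "a i j = Im (y$i) * Re (y$j) - Re (y$i) * Im (y$j)" for i j
  have s1: "inner y (blinfun_apply (rep_endo (Em (imat M))) y) = (\<Sum>i\<in>UNIV. \<Sum>j\<in>UNIV. M$i$j * a i j)"
    by (simp add: app_Em inner_vec_def matrix_vector_mult_def imat_def inner_sum_right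
        inner_complex_def a_def algebra_simps)
       (simp add: sum_distrib_left sum_subtractf sum_negf algebra_simps)
  have "(\<Sum>i\<in>UNIV. \<Sum>j\<in>UNIV. M$i$j * a i j) = (\<Sum>j\<in>UNIV. \<Sum>i\<in>UNIV. M$i$j * a i j)"
    by (rule sum.swap)
  also have "\<dots> = - (\<Sum>j\<in>UNIV. \<Sum>i\<in>UNIV. M$j$i * a j i)"
    by (simp add: Ms a_def sum_negf[symmetric] algebra_simps)
  finally show "inner y (blinfun_apply (rep_endo (Em (imat M))) y) = 0"
    using s1 by simp
qed

lemma opnorm_imat: "opnorm (imat M) = opnorm (cmat (M :: real^'n::finite^'n))"
proof -
  have "norm (imat M *v x) = norm (cmat M *v x)" for x :: "complex^'n"
  proof -
    have "(imat M *v x) $ i = \<i> * ((cmat M *v x) $ i)" for i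
      by (simp add: matrix_vector_mult_def imat_def cmat_def sum_distrib_left mult.assoc)
    then show ?thesis by (simp add: norm_vec_def norm_mult)
  qed
  then show ?thesis unfolding opnorm_def onorm_def by simp
qed

lemma imat_add: "imat (A + B) = imat A + imat B"
  by (simp add: imat_def vec_eq_iff distrib_left)

lemma graph_sym:
  assumes g: "weighted_connected_graph E w"
  shows "transpose (adj_matrix E w) = adj_matrix E w"
    "transpose (laplacian_matrix E w) = laplacian_matrix E w"
proof -
  from g have Es: "E j k = E k j" and ws: "w j k = w k j" for j k
    unfolding weighted_connected_graph_def by blast+
  show a: "transpose (adj_matrix E w) = adj_matrix E w"
    by (simp add: transpose_def adj_matrix_def vec_eq_iff Es ws)
  show "transpose (laplacian_matrix E w) = laplacian_matrix E w"
    by (simp add: transpose_def laplacian_matrix_def vec_eq_iff adj_matrix_def Es ws)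
qed

lemma transpose_add': "transpose (A + B) = transpose A + transpose B"
  by (simp add: transpose_def vec_eq_iff)
lemma transpose_scaleR': "transpose (c *\<^sub>R A) = c *\<^sub>R transpose A"
  by (simp add: transpose_def vec_eq_iff)

theorem theorem3p1:
  fixes E :: "'n::finite \<Rightarrow> 'n \<Rightarrow> bool" and w :: "'n \<Rightarrow> 'n \<Rightarrow> real"
    and H H0 :: "real^'n^'n" and t0 :: real and v1 v2 :: 'n
  assumes graph: "weighted_connected_graph E w"
    and H: "H = adj_matrix E w \<or> H = laplacian_matrix E w"
    and distinct: "v1 \<noteq> v2"
    and pst: "cmod (mexp (imat (t0 *\<^sub>R H)) $ v1 $ v2) = 1"
    and H0_sym: "transpose H0 = H0"
    and H0_nz: "H0 \<noteq> 0"
    and small: "opnorm (cmat H0) * exp (opnorm (cmat H0)) \<le> 1"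
  shows "(opnorm (mexp (imat (t0 *\<^sub>R H + H0)) - mexp (imat (t0 *\<^sub>R H)))
           \<le> opnorm (cmat H0) * exp (opnorm (cmat H0))) \<and>
         (1 - (cmod (mexp (imat (t0 *\<^sub>R H + H0)) $ v1 $ v2))\<^sup>2
           \<le> 2 * opnorm (cmat H0) * exp (opnorm (cmat H0))
             - (opnorm (cmat H0))\<^sup>2 * exp (2 * opnorm (cmat H0))) \<and>
         (2 * opnorm (cmat H0) * exp (opnorm (cmat H0))
             - (opnorm (cmat H0))\<^sup>2 * exp (2 * opnorm (cmat H0))
           \<le> 2 * opnorm (cmat H0) + (opnorm (cmat H0))\<^sup>2 - (opnorm (cmat H0))^3)"
proof -
  define b where "b = opnorm (cmat H0)"
  have b0: "0 \<le> b" unfolding b_def by (metis norm_Em norm_ge_zero)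
  have Hs: "transpose H = H" using H graph_sym[OF graph] by auto
  have s1: "transpose (t0 *\<^sub>R H) = t0 *\<^sub>R H" by (simp add: transpose_scaleR' Hs)
  have s2: "transpose (t0 *\<^sub>R H + H0) = t0 *\<^sub>R H + H0"
    by (simp add: transpose_add' transpose_scaleR' Hs H0_sym)
  define A where "A = Em (imat (t0 *\<^sub>R H))"
  define B where "B = Em (imat H0)"
  have AB: "Em (imat (t0 *\<^sub>R H + H0)) = A + B" by (simp add: A_def B_def imat_add Em_add)
  have sA: "skew A" unfolding A_def by (rule skew_imat[OF s1])
  have sAB: "skew (A + B)" unfolding AB[symmetric] by (rule skew_imat[OF s2])
  have nB: "norm B = b" by (simp add: B_def norm_Em opnorm_imat b_def)
  have "opnorm (mexp (imat (t0 *\<^sub>R H + H0)) - mexp (imat (t0 *\<^sub>R H)))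
      = norm (exp (A + B) - exp A)"
    by (simp add: norm_Em[symmetric] Em_diff Em_mexp AB A_def)
  also have "\<dots> \<le> b" using duhamel[OF sA sAB] nB by simp
  finally have P1: "opnorm (mexp (imat (t0 *\<^sub>R H + H0)) - mexp (imat (t0 *\<^sub>R H))) \<le> b" .
  have bb: "b \<le> b * exp b" using b0 by (simp add: mult_le_cancel_left1)
  define d where "d = b * exp b"
  have d0: "0 \<le> d" using b0 by (simp add: d_def)
  have d1: "d \<le> 1" using small by (simp add: d_def b_def)
  define X where "X = mexp (imat (t0 *\<^sub>R H + H0))"
  define U where "U = mexp (imat (t0 *\<^sub>R H))"
  have "cmod (X $ v1 $ v2 - U $ v1 $ v2) \<le> opnorm (X - U)"
    using entry_le_opnorm[of "X - U" v1 v2] by simp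
  also have "\<dots> \<le> d" using P1 bb by (simp add: X_def U_def d_def)
  finally have e: "cmod (X $ v1 $ v2 - U $ v1 $ v2) \<le> d" .
  have "cmod (U $ v1 $ v2) \<le> cmod (X $ v1 $ v2) + cmod (X $ v1 $ v2 - U $ v1 $ v2)"
    by (metis norm_triangle_sub norm_minus_commute)
  then have ge: "1 - d \<le> cmod (X $ v1 $ v2)" using e pst by (simp add: U_def)
  have "(1 - d)\<^sup>2 \<le> (cmod (X $ v1 $ v2))\<^sup>2" using ge d1 by (intro power_mono) auto
  then have P2: "1 - (cmod (X $ v1 $ v2))\<^sup>2 \<le> 2 * d - d\<^sup>2"
    by (simp add: power2_diff)
  have ed: "2 * b * exp b - b\<^sup>2 * exp (2 * b) = 2 * d - d\<^sup>2"
    by (simp add: d_def power2_eq_square exp_add[symmetric] mult_ac)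
  have P3: "2 * b * exp b - b\<^sup>2 * exp (2 * b) \<le> 2 * b + b\<^sup>2 - b^3"
    by (rule real_ineq[OF b0]) (use small in \<open>simp add: b_def\<close>)
  show ?thesis
    using P1 bb P2 P3 ed
    unfolding b_def[symmetric] d_def[symmetric] X_def[symmetric] U_def[symmetric]
    by (simp add: d_def)
qed


end
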